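(* Let $\mathcal K$ be the set of all continuous functions $k:\mathbb R\to[0,\infty)$ with $\int_{\mathbb R}k(x)\,dx=1$ such that there is a constant $\lambda>0$ with $\int_{\mathbb R}k(x)e^{\lambda|x|}\,dx<+\infty$. For $k\in\mathcal K$ define \[ E(k)=\operatorname{sign}(J(k))\Big[1-\inf_{\lambda\in\mathbb R}\int_{\mathbb R}k(x)e^{\lambda x}\,dx\Big],\qquad J(k)=\int_{\mathbb R}k(x)\,x\,dx . \] Then: (i) $E(k)=-E(\check k)$ for every $k\in\mathcal K$, where $\check k(x)=k(-x)$ for $x\in\mathbb R$; (ii) if $k_1,k_2\in\mathcal K$ and $k_1$ is more skewed to the right than $k_2$, i.e. $k_1(x)\geqslant k_2(x)$ for all $x>0$ and $k_1(x)\leqslant k_2(x)$ for all $x<0$, then $E(k_1)\geqslant E(k_2)$.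
   Context: $\operatorname{sign}$ denotes the sign function with $\operatorname{sign}(0)=0$. The integral $\int_{\mathbb R}k(x)e^{\lambda x}dx$ may equal $+\infty$ for some $\lambda$; the infimum is taken in $[0,+\infty]$. *)

theory Defs
  imports "HOL-Analysis.Analysis"
begin

definition kernel_class :: "(real \<Rightarrow> real) set" where
  "kernel_class = {k. continuous_on UNIV k \<and> (\<forall>x. 0 \<le> k x) \<and>
     (\<integral>\<^sup>+ x. ennreal (k x) \<partial>lborel) = 1 \<and>
     (\<exists>l>0. (\<integral>\<^sup>+ x. ennreal (k x * exp (l * \<bar>x\<bar>)) \<partial>lborel) < \<infinity>)}"

definition J_mean :: "(real \<Rightarrow> real) \<Rightarrow> real" where
  "J_mean k = (\<integral> x. k x * x \<partial>lborel)"

definition mgf :: "(real \<Rightarrow> real) \<Rightarrow> real \<Rightarrow> ennreal" where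
  "mgf k l = (\<integral>\<^sup>+ x. ennreal (k x * exp (l * x)) \<partial>lborel)"

text \<open>E(k) = sign(J(k)) (1 - inf over lambda of mgf). The infimum is taken in
  [0, +infinity]; it is at most mgf k 0 = 1, hence finite for k in K.\<close>
definition E_skew :: "(real \<Rightarrow> real) \<Rightarrow> real" where
  "E_skew k = sgn (J_mean k) * (1 - enn2real (INF l. mgf k l))"

end

theory Submission
  imports Defs
begin

lemma kc_meas:
  assumes "k \<in> kernel_class" shows "k \<in> borel_measurable borel"
  using assms by (auto simp: kernel_class_def intro: borel_measurable_continuous_onI)

lemma kc_nonneg:
  assumes "k \<in> kernel_class" shows "0 \<le> k x"
  using assms by (auto simp: kernel_class_def)

lemma kc_integrable:
  assumes "k \<in> kernel_class" shows "integrable lborel k" "(\<integral>x. k x \<partial>lborel) = 1"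
proof -
  have m[measurable]: "k \<in> borel_measurable borel" using kc_meas[OF assms] .
  have n: "(\<integral>\<^sup>+ x. ennreal (k x) \<partial>lborel) = 1" using assms by (auto simp: kernel_class_def)
  show i: "integrable lborel k"
    by (rule integrableI_nn_integral_finite[where x=1]) (auto simp: n kc_nonneg[OF assms])
  have "(\<integral>\<^sup>+ x. ennreal (k x) \<partial>lborel) = ennreal (\<integral>x. k x \<partial>lborel)"
    by (rule nn_integral_eq_integral[OF i]) (auto simp: kc_nonneg[OF assms])
  then have "ennreal (\<integral>x. k x \<partial>lborel) = 1" using n by simp
  moreover have "(\<integral>x. k x \<partial>lborel) \<ge> 0" by (rule integral_nonneg_AE) (auto simp: kc_nonneg[OF assms])
  ultimately show "(\<integral>x. k x \<partial>lborel) = 1"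
    by (metis ennreal_1 ennreal_inj zero_le_one)
qed

lemma kc_integrable_x:
  assumes "k \<in> kernel_class" shows "integrable lborel (\<lambda>x. k x * x)"
proof -
  have m[measurable]: "k \<in> borel_measurable borel" using kc_meas[OF assms] .
  obtain l where l: "l > 0" and fin: "(\<integral>\<^sup>+ x. ennreal (k x * exp (l * \<bar>x\<bar>)) \<partial>lborel) < \<infinity>"
    using assms by (auto simp: kernel_class_def)
  show ?thesis
  proof (rule integrableI_bounded)
    show "(\<lambda>x. k x * x) \<in> borel_measurable lborel" by simp
    have "(\<integral>\<^sup>+ x. ennreal (norm (k x * x)) \<partial>lborel)
        \<le> (\<integral>\<^sup>+ x. ennreal (1/l) * ennreal (k x * exp (l * \<bar>x\<bar>)) \<partial>lborel)"
    proof (rule nn_integral_mono)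
      fix x
      have "l * \<bar>x\<bar> \<le> exp (l * \<bar>x\<bar>)"
        using exp_ge_add_one_self[of "l * \<bar>x\<bar>"] by linarith
      then have "\<bar>x\<bar> \<le> exp (l * \<bar>x\<bar>) / l" using l by (simp add: field_simps)
      then have "k x * \<bar>x\<bar> \<le> k x * (exp (l * \<bar>x\<bar>) / l)"
        by (rule mult_left_mono) (rule kc_nonneg[OF assms])
      then show "ennreal (norm (k x * x)) \<le> ennreal (1/l) * ennreal (k x * exp (l * \<bar>x\<bar>))"
        using kc_nonneg[OF assms, of x] l
        by (subst ennreal_mult[symmetric]) (auto simp: abs_mult intro!: ennreal_leI)
    qed
    also have "\<dots> = ennreal (1/l) * (\<integral>\<^sup>+ x. ennreal (k x * exp (l * \<bar>x\<bar>)) \<partial>lborel)"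
      by (rule nn_integral_cmult) simp
    also have "\<dots> < \<infinity>" using fin by (simp add: ennreal_mult_less_top)
    finally show "(\<integral>\<^sup>+ x. ennreal (norm (k x * x)) \<partial>lborel) < \<infinity>" .
  qed
qed


lemma mgf0: assumes "k \<in> kernel_class" shows "mgf k 0 = 1"
  using assms by (simp add: mgf_def kernel_class_def)

lemma mgf_ge1:
  assumes k: "k \<in> kernel_class" and lj: "0 \<le> l * J_mean k" shows "1 \<le> mgf k l"
proof (cases "mgf k l = \<infinity>")
  case True then show ?thesis by simp
next
  case False
  have m[measurable]: "k \<in> borel_measurable borel" using kc_meas[OF k] .
  define f where "f x = k x * exp (l * x)" for x
  have fm[measurable]: "f \<in> borel_measurable borel" unfolding f_def by simp
  have fn: "0 \<le> f x" for x unfolding f_def using kc_nonneg[OF k, of x] by simp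
  have eq: "mgf k l = ennreal (enn2real (mgf k l))" using False by (simp add: less_top)
  have fi: "integrable lborel f"
    by (rule integrableI_nn_integral_finite[where x="enn2real (mgf k l)"])
       (use eq fn in \<open>auto simp: mgf_def f_def\<close>)
  have me: "mgf k l = ennreal (\<integral>x. f x \<partial>lborel)"
    unfolding mgf_def f_def[symmetric]
    by (rule nn_integral_eq_integral[OF fi]) (auto simp: fn)
  have "1 + l * J_mean k = (\<integral>x. k x + l * (k x * x) \<partial>lborel)"
    using kc_integrable[OF k] kc_integrable_x[OF k] by (simp add: J_mean_def)
  also have "\<dots> \<le> (\<integral>x. f x \<partial>lborel)"
  proof (rule integral_mono)
    show "integrable lborel (\<lambda>x. k x + l * (k x * x))"
      using kc_integrable[OF k] kc_integrable_x[OF k] by simp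
    show "integrable lborel f" by (rule fi)
    fix x
    have "k x * (1 + l * x) \<le> k x * exp (l * x)"
      by (rule mult_left_mono[OF exp_ge_add_one_self kc_nonneg[OF k]])
    then show "k x + l * (k x * x) \<le> f x" by (simp add: f_def algebra_simps)
  qed
  finally have "1 \<le> (\<integral>x. f x \<partial>lborel)" using lj by linarith
  then show ?thesis unfolding me by (simp add: ennreal_leI[of 1, simplified])
qed

lemma kc_refl_meas:
  assumes "k \<in> kernel_class" shows "(\<lambda>x. k (- x)) \<in> borel_measurable borel"
  using kc_meas[OF assms] by measurable

lemma mgf_refl:
  assumes k: "k \<in> kernel_class" shows "mgf (\<lambda>x. k (- x)) l = mgf k (- l)"
proof -
  have m[measurable]: "k \<in> borel_measurable borel" using kc_meas[OF k] .
  have "mgf k (- l) = \<bar>-1::real\<bar> * (\<integral>\<^sup>+x. (\<lambda>y. ennreal (k y * exp (- l * y))) (0 + (-1) * x) \<partial>lborel)"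
    unfolding mgf_def by (rule nn_integral_real_affine) auto
  then show ?thesis by (simp add: mgf_def)
qed

lemma J_refl: "J_mean (\<lambda>x. k (- x)) = - J_mean k"
proof -
  have "J_mean k = \<bar>-1::real\<bar> *\<^sub>R (\<integral>x. (\<lambda>y. k y * y) (0 + (-1) * x) \<partial>lborel)"
    unfolding J_mean_def by (rule lborel_integral_real_affine) auto
  then show ?thesis by (simp add: J_mean_def)
qed

lemma INF_refl: "(INF l. mgf k (- l)) = (INF l. mgf k l)"
proof -
  have "range (\<lambda>l::real. - l) = UNIV" by (metis surj_def minus_minus)
  then show ?thesis by (metis image_image[of "mgf k" uminus UNIV] )
qed

lemma nn_cancel:
  fixes a b c d :: "real \<Rightarrow> real"
  assumes [measurable]: "a \<in> borel_measurable borel" "b \<in> borel_measurable borel"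
    "c \<in> borel_measurable borel" "d \<in> borel_measurable borel"
  and nn: "\<And>x. 0 \<le> a x" "\<And>x. 0 \<le> b x" "\<And>x. 0 \<le> c x" "\<And>x. 0 \<le> d x"
  and le: "\<And>x. a x + b x \<le> c x + d x"
  and b1: "(\<integral>\<^sup>+x. ennreal (b x) \<partial>lborel) = 1" and d1: "(\<integral>\<^sup>+x. ennreal (d x) \<partial>lborel) = 1"
  shows "(\<integral>\<^sup>+x. ennreal (a x) \<partial>lborel) \<le> (\<integral>\<^sup>+x. ennreal (c x) \<partial>lborel)"
proof -
  have "1 + (\<integral>\<^sup>+x. ennreal (a x) \<partial>lborel) = (\<integral>\<^sup>+x. ennreal (a x) + ennreal (b x) \<partial>lborel)"
    by (subst nn_integral_add) (auto simp: b1 add.commute)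
  also have "\<dots> \<le> (\<integral>\<^sup>+x. ennreal (c x) + ennreal (d x) \<partial>lborel)"
    by (rule nn_integral_mono) (use nn le in \<open>simp add: ennreal_plus[symmetric] del: ennreal_plus\<close>)
  also have "\<dots> = 1 + (\<integral>\<^sup>+x. ennreal (c x) \<partial>lborel)"
    by (subst nn_integral_add) (auto simp: d1 add.commute)
  finally show ?thesis by (simp add: ennreal_add_left_cancel_le)
qed


lemma skew_sign:
  fixes l x :: real and k1 k2 :: "real \<Rightarrow> real"
  assumes p: "\<forall>x>0. k1 x \<ge> k2 x" and n: "\<forall>x<0. k1 x \<le> k2 x"
  shows "l \<le> 0 \<Longrightarrow> (k1 x - k2 x) * (exp (l * x) - 1) \<le> 0"
    and "l \<ge> 0 \<Longrightarrow> (k1 x - k2 x) * (exp (l * x) - 1) \<ge> 0"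
proof -
  consider "x > 0" | "x < 0" | "x = 0" by linarith
  note c = this
  show "l \<le> 0 \<Longrightarrow> (k1 x - k2 x) * (exp (l * x) - 1) \<le> 0"
  proof (cases rule: c)
    case 1 assume "l \<le> 0"
    then have "l * x \<le> 0" using 1 by (simp add: mult_nonpos_nonneg)
    then show ?thesis using p 1 by (simp add: mult_nonneg_nonpos)
  next
    case 2 assume "l \<le> 0"
    then have "l * x \<ge> 0" using 2 by (simp add: mult_nonpos_nonpos)
    then show ?thesis using n 2 by (simp add: mult_nonpos_nonneg)
  qed simp
  show "l \<ge> 0 \<Longrightarrow> (k1 x - k2 x) * (exp (l * x) - 1) \<ge> 0"
  proof (cases rule: c)
    case 1 assume "l \<ge> 0"
    then have "l * x \<ge> 0" using 1 by simp
    then show ?thesis using p 1 by simp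
  next
    case 2 assume "l \<ge> 0"
    then have "l * x \<le> 0" using 2 by (simp add: mult_nonneg_nonpos)
    then show ?thesis using n 2 by (simp add: mult_nonpos_nonpos)
  qed simp
qed

lemma mgf_cmp:
  assumes k1: "k1 \<in> kernel_class" and k2: "k2 \<in> kernel_class"
  and p: "\<forall>x>0. k1 x \<ge> k2 x" and n: "\<forall>x<0. k1 x \<le> k2 x"
  shows "l \<le> 0 \<Longrightarrow> mgf k1 l \<le> mgf k2 l" and "l \<ge> 0 \<Longrightarrow> mgf k2 l \<le> mgf k1 l"
proof -
  have [measurable]: "k1 \<in> borel_measurable borel" "k2 \<in> borel_measurable borel"
    using kc_meas k1 k2 by auto
  have i1: "(\<integral>\<^sup>+x. ennreal (k1 x) \<partial>lborel) = 1" "(\<integral>\<^sup>+x. ennreal (k2 x) \<partial>lborel) = 1"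
    using k1 k2 by (auto simp: kernel_class_def)
  have nn: "0 \<le> k1 x" "0 \<le> k2 x" "0 \<le> k1 x * exp (l * x)" "0 \<le> k2 x * exp (l * x)" for x
    using kc_nonneg[OF k1, of x] kc_nonneg[OF k2, of x] by auto
  have pw1: "k1 x * exp (l * x) + k2 x \<le> k2 x * exp (l * x) + k1 x" if "l \<le> 0" for x
  proof -
    have "(k1 x - k2 x) * (exp (l * x) - 1) \<le> 0" using skew_sign(1)[OF p n that] .
    then show ?thesis by (simp add: algebra_simps)
  qed
  have pw2: "k2 x * exp (l * x) + k1 x \<le> k1 x * exp (l * x) + k2 x" if "l \<ge> 0" for x
  proof -
    have "(k1 x - k2 x) * (exp (l * x) - 1) \<ge> 0" using skew_sign(2)[OF p n that] .
    then show ?thesis by (simp add: algebra_simps)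
  qed
  show "l \<le> 0 \<Longrightarrow> mgf k1 l \<le> mgf k2 l"
    unfolding mgf_def
    by (rule nn_cancel[where b=k2 and d=k1]) (use nn i1 pw1 in auto)
  show "l \<ge> 0 \<Longrightarrow> mgf k2 l \<le> mgf k1 l"
    unfolding mgf_def
    by (rule nn_cancel[where b=k1 and d=k2]) (use nn i1 pw2 in auto)
qed

lemma m_bounds:
  assumes k: "k \<in> kernel_class"
  shows "(INF l. mgf k l) \<le> 1" "0 \<le> enn2real (INF l. mgf k l)" "enn2real (INF l. mgf k l) \<le> 1"
proof -
  show a: "(INF l. mgf k l) \<le> 1" using INF_lower[of 0 UNIV "mgf k"] mgf0[OF k] by simp
  show "0 \<le> enn2real (INF l. mgf k l)" by simp
  show "enn2real (INF l. mgf k l) \<le> 1" using enn2real_mono[OF a] by simp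
qed

theorem proposition2p1:
  shows "(\<forall>k\<in>kernel_class. E_skew k = - E_skew (\<lambda>x. k (- x))) \<and>
         (\<forall>k1\<in>kernel_class. \<forall>k2\<in>kernel_class.
           (\<forall>x>0. k1 x \<ge> k2 x) \<longrightarrow> (\<forall>x<0. k1 x \<le> k2 x) \<longrightarrow>
           E_skew k1 \<ge> E_skew k2)"
proof (intro conjI ballI impI)
  fix k assume k: "k \<in> kernel_class"
  have "(INF l. mgf (\<lambda>x. k (- x)) l) = (INF l. mgf k l)"
    using mgf_refl[OF k] INF_refl by simp
  then show "E_skew k = - E_skew (\<lambda>x. k (- x))"
    unfolding E_skew_def J_refl by (simp add: sgn_minus)
next
  fix k1 k2 assume k1: "k1 \<in> kernel_class" and k2: "k2 \<in> kernel_class"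
    and p: "\<forall>x>0. k1 x \<ge> k2 x" and n: "\<forall>x<0. k1 x \<le> k2 x"
  define m1 where "m1 = (INF l. mgf k1 l)"
  define m2 where "m2 = (INF l. mgf k2 l)"
  have b1: "m1 \<le> 1" "0 \<le> enn2real m1" "enn2real m1 \<le> 1" using m_bounds[OF k1] m1_def by auto
  have b2: "m2 \<le> 1" "0 \<le> enn2real m2" "enn2real m2 \<le> 1" using m_bounds[OF k2] m2_def by auto
  have JJ: "J_mean k2 \<le> J_mean k1"
    unfolding J_mean_def
  proof (rule integral_mono[OF kc_integrable_x[OF k2] kc_integrable_x[OF k1]])
    fix x :: real
    consider "x > 0" | "x < 0" | "x = 0" by linarith
    then show "k2 x * x \<le> k1 x * x"
      by cases (use p n in \<open>auto intro: mult_right_mono mult_right_mono_neg\<close>)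
  qed
  consider "J_mean k2 \<le> 0 \<and> 0 \<le> J_mean k1" | "0 < J_mean k2" | "J_mean k1 < 0" by linarith
  then show "E_skew k2 \<le> E_skew k1"
  proof cases
    case 1
    have "E_skew k2 \<le> 0" using 1 b2 unfolding E_skew_def m2_def
      by (cases "J_mean k2 = 0") (auto simp: mult_nonpos_nonneg)
    moreover have "0 \<le> E_skew k1" using 1 b1 unfolding E_skew_def m1_def
      by (cases "J_mean k1 = 0") auto
    ultimately show ?thesis by linarith
  next
    case 2
    have "m1 \<le> m2" unfolding m2_def
    proof (rule INF_greatest)
      fix l :: real assume "l \<in> UNIV"
      show "m1 \<le> mgf k2 l"
      proof (cases "l \<le> 0")
        case True
        then show ?thesis unfolding m1_def using INF_lower[of l UNIV "mgf k1"] mgf_cmp(1)[OF k1 k2 p n True]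
          by auto
      next
        case False
        then have "1 \<le> mgf k2 l" using 2 by (intro mgf_ge1[OF k2]) simp
        then show ?thesis using b1 by auto
      qed
    qed
    then have "enn2real m1 \<le> enn2real m2" using b2 by (intro enn2real_mono) (auto simp: order_le_less_trans)
    then show ?thesis using 2 JJ unfolding E_skew_def m1_def m2_def by simp
  next
    case 3
    have "m2 \<le> m1" unfolding m1_def
    proof (rule INF_greatest)
      fix l :: real assume "l \<in> UNIV"
      show "m2 \<le> mgf k1 l"
      proof (cases "l \<ge> 0")
        case True
        then show ?thesis unfolding m2_def using INF_lower[of l UNIV "mgf k2"] mgf_cmp(2)[OF k1 k2 p n True]
          by auto
      next
        case False
        then have "1 \<le> mgf k1 l" using 3 by (intro mgf_ge1[OF k1]) (simp add: mult_nonpos_nonpos)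
        then show ?thesis using b2 by auto
      qed
    qed
    then have "enn2real m2 \<le> enn2real m1" using b1 by (intro enn2real_mono) (auto simp: order_le_less_trans)
    then show ?thesis using 3 JJ unfolding E_skew_def m1_def m2_def by simp
  qed
qed

end
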